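(* Assume: (A1) $f(x,y)$ and each component of $g(x,y)$ are convex in $y$ for each fixed $x$, and $f,g$ are twice continuously differentiable; (A2) $Y\subseteq\mathbb{R}^m$ is a compact convex set with $\{y:\exists x\in X \text{ such that } g(x,y)\le 0\}\subseteq\mathrm{int}(Y)$; (A3) $F$ and $G$ are twice continuously differentiable; (R1) for each $x\in X$ there exists $y$ with $g(x,y)<0$; (R2) $X$ is compact and nonempty, and the constraint set $\{x:G(x)\le0\}$ satisfies MFCQ at each $x\in X$. Let $\overline{\epsilon}\ge0$. Then, as $\epsilon\downarrow\overline{\epsilon}$, $\mu\downarrow0$ and $z\downarrow0$, $\limsup_{\epsilon\downarrow\overline{\epsilon},\mu\downarrow0,z\downarrow0}\big(z\text{-}\arg\min\mathsf{DBP}(\epsilon,\mu)\big)\subseteq\arg\min\mathsf{DBP}(\overline{\epsilon},0)$, and $z\text{-}\min\mathsf{DBP}(\epsilon,\mu)\to\min\mathsf{DBP}(\overline{\epsilon},0)$.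
   Context: Let $F:\mathbb{R}^n\times\mathbb{R}^m\to\mathbb{R}$, $f:\mathbb{R}^n\times\mathbb{R}^m\to\mathbb{R}$, $g:\mathbb{R}^n\times\mathbb{R}^m\to\mathbb{R}^p$, $G:\mathbb{R}^n\to\mathbb{R}^q$; vector inequalities componentwise; $X=\{x:G(x)\le0\}$; MFCQ for $\{x:G(x)\le0\}$ at $x$ means there is $d$ with $\nabla G_i(x)^{\mathsf T}d<0$ for all active indices $i$. For $\mu\ge0$, $h_\mu(\lambda,x)=\min_y\{\mu\|y\|^2+f(x,y)+\lambda^{\mathsf T}g(x,y):y\in Y\}$ with $Y$ from (A2); $\mathcal{C}(\epsilon,\mu)=\{(x,y,\lambda): G(x)\le0,\ g(x,y)\le\epsilon,\ \lambda\ge0,\ f(x,y)-h_\mu(\lambda,x)\le\epsilon\}$; $\mathsf{DBP}(\epsilon,\mu)$ is the problem of minimizing $F(x,y)$ over $(x,y,\lambda)\in\mathcal{C}(\epsilon,\mu)$. $z\text{-}\arg\min\mathsf{DBP}(\epsilon,\mu)$ is the set of feasible $(x,y,\lambda)$ with $F(x,y)\le\inf\mathsf{DBP}(\epsilon,\mu)+z$, and $z\text{-}\min\mathsf{DBP}(\epsilon,\mu)$ denotes the objective value at such points (any value in $[\inf, \inf+z]$ attained there). $\limsup$ of sets is the Painlevé–Kuratowski outer limit: the set of all cluster points of sequences of elements of the sets along the parameter sequence. *)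

theory Defs
  imports "HOL-Analysis.Analysis"
begin

definition C2 :: "('a::euclidean_space \<Rightarrow> 'b::real_normed_vector) \<Rightarrow> bool" where
  "C2 f \<longleftrightarrow> (\<exists>Df D2f.
     (\<forall>p. (f has_derivative blinfun_apply (Df p)) (at p)) \<and>
     (\<forall>p. (Df has_derivative blinfun_apply (D2f p)) (at p)) \<and>
     continuous_on UNIV D2f)"

definition Xset :: "(real^'n \<Rightarrow> real^'q) \<Rightarrow> (real^'n) set" where
  "Xset G = {x. \<forall>i. G x $ i \<le> 0}"

definition MFCQ :: "(real^'n \<Rightarrow> real^'q) \<Rightarrow> real^'n \<Rightarrow> bool" where
  "MFCQ G x \<longleftrightarrow> (\<exists>d. \<forall>i. G x $ i = 0 \<longrightarrow>
      frechet_derivative (\<lambda>u. G u $ i) (at x) d < 0)"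

definition hmu :: "(real^'m) set \<Rightarrow> (real^'n \<Rightarrow> real^'m \<Rightarrow> real) \<Rightarrow> (real^'n \<Rightarrow> real^'m \<Rightarrow> real^'p)
    \<Rightarrow> real \<Rightarrow> real^'p \<Rightarrow> real^'n \<Rightarrow> real" where
  "hmu Y f g \<mu> lam x = Inf ((\<lambda>y. \<mu> * (norm y)\<^sup>2 + f x y + lam \<bullet> g x y) ` Y)"

definition Cset :: "(real^'n \<Rightarrow> real^'q) \<Rightarrow> (real^'n \<Rightarrow> real^'m \<Rightarrow> real) \<Rightarrow> (real^'n \<Rightarrow> real^'m \<Rightarrow> real^'p)
    \<Rightarrow> (real^'m) set \<Rightarrow> real \<Rightarrow> real \<Rightarrow> ((real^'n) \<times> (real^'m) \<times> (real^'p)) set" where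
  "Cset G f g Y \<epsilon> \<mu> = {(x, y, lam). (\<forall>i. G x $ i \<le> 0) \<and> (\<forall>i. g x y $ i \<le> \<epsilon>) \<and>
      (\<forall>i. 0 \<le> lam $ i) \<and> f x y - hmu Y f g \<mu> lam x \<le> \<epsilon>}"

definition DBP_inf :: "(real^'n \<Rightarrow> real^'m \<Rightarrow> real) \<Rightarrow> (real^'n \<Rightarrow> real^'q) \<Rightarrow> (real^'n \<Rightarrow> real^'m \<Rightarrow> real)
    \<Rightarrow> (real^'n \<Rightarrow> real^'m \<Rightarrow> real^'p) \<Rightarrow> (real^'m) set \<Rightarrow> real \<Rightarrow> real \<Rightarrow> real" where
  "DBP_inf F G f g Y \<epsilon> \<mu> = Inf ((\<lambda>(x, y, lam). F x y) ` Cset G f g Y \<epsilon> \<mu>)"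

definition DBP_zargmin :: "(real^'n \<Rightarrow> real^'m \<Rightarrow> real) \<Rightarrow> (real^'n \<Rightarrow> real^'q) \<Rightarrow> (real^'n \<Rightarrow> real^'m \<Rightarrow> real)
    \<Rightarrow> (real^'n \<Rightarrow> real^'m \<Rightarrow> real^'p) \<Rightarrow> (real^'m) set \<Rightarrow> real \<Rightarrow> real \<Rightarrow> real
    \<Rightarrow> ((real^'n) \<times> (real^'m) \<times> (real^'p)) set" where
  "DBP_zargmin F G f g Y \<epsilon> \<mu> z = {(x, y, lam) \<in> Cset G f g Y \<epsilon> \<mu>. F x y \<le> DBP_inf F G f g Y \<epsilon> \<mu> + z}"

definition DBP_argmin :: "(real^'n \<Rightarrow> real^'m \<Rightarrow> real) \<Rightarrow> (real^'n \<Rightarrow> real^'q) \<Rightarrow> (real^'n \<Rightarrow> real^'m \<Rightarrow> real)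
    \<Rightarrow> (real^'n \<Rightarrow> real^'m \<Rightarrow> real^'p) \<Rightarrow> (real^'m) set \<Rightarrow> real \<Rightarrow> real
    \<Rightarrow> ((real^'n) \<times> (real^'m) \<times> (real^'p)) set" where
  "DBP_argmin F G f g Y \<epsilon> \<mu> = {(x, y, lam) \<in> Cset G f g Y \<epsilon> \<mu>.
      \<forall>(x', y', lam') \<in> Cset G f g Y \<epsilon> \<mu>. F x y \<le> F x' y'}"

end

theory Submission imports Defs begin

lemma C2_cont: "C2 h \<Longrightarrow> continuous_on UNIV h"
  unfolding C2_def
  by (metis continuous_at_imp_continuous_on has_derivative_continuous)

lemma C2_seq:
  assumes "C2 (\<lambda>(x, y). H x y)" "xs \<longlonglongrightarrow> x" "ys \<longlonglongrightarrow> y"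
  shows "(\<lambda>k. H (xs k) (ys k)) \<longlonglongrightarrow> H x y"
proof -
  have "isCont (\<lambda>(x, y). H x y) (x, y)"
    using C2_cont[OF assms(1)] by (simp add: continuous_on_eq_continuous_at)
  from isCont_tendsto_compose[OF this tendsto_Pair[OF assms(2,3)]] show ?thesis by simp
qed

lemma C2_cont2:
  assumes "C2 (\<lambda>(x, y). H x y)"
  shows "continuous_on S (\<lambda>y. H x y)"
proof -
  have "continuous_on UNIV ((\<lambda>(x, y). H x y) \<circ> (\<lambda>y. (x, y)))"
    by (intro continuous_on_compose continuous_intros) (auto intro: continuous_on_subset[OF C2_cont[OF assms]])
  then show ?thesis by (auto simp: o_def intro: continuous_on_subset)
qed

locale dbp =
  fixes F f :: "real^'n \<Rightarrow> real^'m \<Rightarrow> real"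
    and g :: "real^'n \<Rightarrow> real^'m \<Rightarrow> real^'p"
    and G :: "real^'n \<Rightarrow> real^'q"
    and Y :: "(real^'m) set"
  assumes cvx_g: "\<And>x i. convex_on UNIV (\<lambda>y. g x y $ i)"
    and C2f: "C2 (\<lambda>(x, y). f x y)"
    and C2g: "C2 (\<lambda>(x, y). g x y)"
    and cY: "compact Y"
    and intY: "{y. \<exists>x \<in> Xset G. \<forall>i. g x y $ i \<le> 0} \<subseteq> interior Y"
    and C2F: "C2 (\<lambda>(x, y). F x y)"
    and C2G: "C2 G"
    and R1: "\<And>x. x \<in> Xset G \<Longrightarrow> \<exists>y. \<forall>i. g x y $ i < 0"
    and cX: "compact (Xset G)" and neX: "Xset G \<noteq> {}"
begin

lemma inY: "x \<in> Xset G \<Longrightarrow> (\<forall>i. g x y $ i \<le> 0) \<Longrightarrow> y \<in> Y"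
  using intY interior_subset by blast

lemma Yne: "Y \<noteq> {}"
proof -
  obtain x where "x \<in> Xset G" using neX by auto
  then obtain y where "\<forall>i. g x y $ i < 0" using R1 by blast
  then show ?thesis using inY[OF \<open>x \<in> Xset G\<close>, of y] by (auto intro: less_imp_le)
qed

lemma g_seq: "xs \<longlonglongrightarrow> x \<Longrightarrow> ys \<longlonglongrightarrow> y \<Longrightarrow> (\<lambda>k. g (xs k) (ys k) $ i) \<longlonglongrightarrow> g x y $ i"
  by (rule tendsto_vec_nth) (rule C2_seq[OF C2g])

lemma f_seq: "xs \<longlonglongrightarrow> x \<Longrightarrow> ys \<longlonglongrightarrow> y \<Longrightarrow> (\<lambda>k. f (xs k) (ys k)) \<longlonglongrightarrow> f x y"
  by (rule C2_seq[OF C2f])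

lemma F_seq: "xs \<longlonglongrightarrow> x \<Longrightarrow> ys \<longlonglongrightarrow> y \<Longrightarrow> (\<lambda>k. F (xs k) (ys k)) \<longlonglongrightarrow> F x y"
  by (rule C2_seq[OF C2F])

lemma gvec_seq: "xs \<longlonglongrightarrow> x \<Longrightarrow> ys \<longlonglongrightarrow> y \<Longrightarrow> (\<lambda>k. g (xs k) (ys k)) \<longlonglongrightarrow> g x y"
  by (rule C2_seq[OF C2g])

lemma G_seq: "xs \<longlonglongrightarrow> x \<Longrightarrow> (\<lambda>k. G (xs k) $ i) \<longlonglongrightarrow> G x $ i"
  by (intro tendsto_vec_nth continuous_on_tendsto_compose[OF C2_cont[OF C2G]]) auto

lemma phi_bdd: "bdd_below ((\<lambda>y. \<mu> * (norm y)\<^sup>2 + f x y + lam \<bullet> g x y) ` Y)"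
proof -
  have "continuous_on Y (\<lambda>y. \<mu> * (norm y)\<^sup>2 + f x y + lam \<bullet> g x y)"
    by (intro continuous_intros C2_cont2[OF C2f] C2_cont2[OF C2g])
  then have "compact ((\<lambda>y. \<mu> * (norm y)\<^sup>2 + f x y + lam \<bullet> g x y) ` Y)"
    using cY compact_continuous_image by blast
  then show ?thesis by (intro bounded_imp_bdd_below compact_imp_bounded)
qed

lemma hmu_le: "y \<in> Y \<Longrightarrow> hmu Y f g \<mu> lam x \<le> \<mu> * (norm y)\<^sup>2 + f x y + lam \<bullet> g x y"
  unfolding hmu_def by (rule cINF_lower[OF phi_bdd])

lemma hmu_mono: "0 \<le> \<mu> \<Longrightarrow> hmu Y f g 0 lam x \<le> hmu Y f g \<mu> lam x"
  unfolding hmu_def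
  by (rule cINF_mono[OF Yne phi_bdd]) (auto intro!: bexI)

lemma Csub: "e0 \<le> e \<Longrightarrow> 0 \<le> \<mu> \<Longrightarrow> Cset G f g Y e0 0 \<subseteq> Cset G f g Y e \<mu>"
proof (intro subsetI)
  fix q assume a: "e0 \<le> e" "0 \<le> \<mu>" and q: "q \<in> Cset G f g Y e0 0"
  obtain x y lam where qe: "q = (x, y, lam)" by (cases q) auto
  have "hmu Y f g 0 lam x \<le> hmu Y f g \<mu> lam x" using hmu_mono a by blast
  with q a show "q \<in> Cset G f g Y e \<mu>" unfolding qe Cset_def by (auto intro: order_trans)
qed

lemma Cclosed:
  assumes es: "es \<longlonglongrightarrow> e0" and ms: "ms \<longlonglongrightarrow> 0" and mpos: "\<And>k. ms k \<ge> 0"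
    and qs: "\<And>k. qs k \<in> Cset G f g Y (es k) (ms k)" and lim: "qs \<longlonglongrightarrow> (x, y, lam)"
  shows "(x, y, lam) \<in> Cset G f g Y e0 0"
proof -
  define xs where "xs = (\<lambda>k. fst (qs k))"
  define ys where "ys = (\<lambda>k. fst (snd (qs k)))"
  define ls where "ls = (\<lambda>k. snd (snd (qs k)))"
  have qe: "qs k = (xs k, ys k, ls k)" for k by (simp add: xs_def ys_def ls_def)
  have xl: "xs \<longlonglongrightarrow> x" unfolding xs_def using tendsto_fst[OF lim] by simp
  have yl: "ys \<longlonglongrightarrow> y" unfolding ys_def using tendsto_fst[OF tendsto_snd[OF lim]] by simp
  have ll: "ls \<longlonglongrightarrow> lam" unfolding ls_def using tendsto_snd[OF tendsto_snd[OF lim]] by simp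
  have C: "(\<forall>i. G (xs k) $ i \<le> 0) \<and> (\<forall>i. g (xs k) (ys k) $ i \<le> es k) \<and>
      (\<forall>i. 0 \<le> ls k $ i) \<and> f (xs k) (ys k) - hmu Y f g (ms k) (ls k) (xs k) \<le> es k" for k
    using qs[of k] unfolding qe Cset_def by auto
  have 1: "G x $ i \<le> 0" for i
    using C by (intro LIMSEQ_le_const2[OF G_seq[OF xl]]) auto
  have 2: "g x y $ i \<le> e0" for i
    using C by (intro LIMSEQ_le[OF g_seq[OF xl yl] es]) auto
  have 3: "0 \<le> lam $ i" for i
    using C by (intro LIMSEQ_le_const[OF tendsto_vec_nth[OF ll]]) auto
  have 4: "f x y - e0 \<le> 0 * (norm y')\<^sup>2 + f x y' + lam \<bullet> g x y'" if "y' \<in> Y" for y'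
  proof (rule LIMSEQ_le)
    show "(\<lambda>k. f (xs k) (ys k) - es k) \<longlonglongrightarrow> f x y - e0"
      by (intro tendsto_intros f_seq xl yl es)
    show "(\<lambda>k. ms k * (norm y')\<^sup>2 + f (xs k) y' + ls k \<bullet> g (xs k) y') \<longlonglongrightarrow> 0 * (norm y')\<^sup>2 + f x y' + lam \<bullet> g x y'"
      by (intro tendsto_intros f_seq gvec_seq xl ms ll)
    show "\<exists>N. \<forall>k\<ge>N. f (xs k) (ys k) - es k \<le> ms k * (norm y')\<^sup>2 + f (xs k) y' + ls k \<bullet> g (xs k) y'"
      using C hmu_le[OF that] by (smt (verit))
  qed
  have "f x y - e0 \<le> hmu Y f g 0 lam x"
    unfolding hmu_def by (rule cINF_greatest[OF Yne]) (use 4 in auto)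
  then show ?thesis using 1 2 3 unfolding Cset_def by auto
qed

lemma ybound0:
  assumes e: "e \<ge> 0"
  shows "\<exists>R. \<forall>x\<in>Xset G. \<forall>y. (\<forall>i. g x y $ i \<le> e) \<longrightarrow> norm y \<le> R"
proof (rule ccontr)
  assume "\<not> ?thesis"
  then have "\<forall>n::nat. \<exists>x y. x \<in> Xset G \<and> (\<forall>i. g x y $ i \<le> e) \<and> norm y > real n"
    by (meson not_le)
  then obtain xs ys where xy: "\<And>n. xs n \<in> Xset G" "\<And>n. \<forall>i. g (xs n) (ys n) $ i \<le> e"
      "\<And>n. norm (ys n) > real n"
    by metis
  obtain a r where a: "a \<in> Xset G" and r: "strict_mono r" and xr: "(xs \<circ> r) \<longlonglongrightarrow> a"
    using seq_compactE[OF compact_imp_seq_compact[OF cX], of xs] xy(1) by blast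
  obtain y0 where y0: "\<forall>i. g a y0 $ i < 0" using R1[OF a] by blast
  have y0Y: "y0 \<in> Y" using inY[OF a] y0 by (auto intro: less_imp_le)
  obtain R0 where R0: "R0 > 0" "Y \<subseteq> ball 0 R0"
    using bounded_subset_ballD[OF compact_imp_bounded[OF cY]] by blast
  have "eventually (\<lambda>k. \<forall>i. g ((xs \<circ> r) k) y0 $ i < 0) sequentially"
  proof (rule eventually_all_finite)
    fix i
    have "(\<lambda>k. g ((xs \<circ> r) k) ((\<lambda>_. y0) k) $ i) \<longlonglongrightarrow> g a y0 $ i"
      by (rule g_seq[OF xr tendsto_const])
    then show "eventually (\<lambda>k. g ((xs \<circ> r) k) y0 $ i < 0) sequentially"
      using order_tendstoD(2) y0 by fastforce
  qed
  then obtain N1 where N1: "\<And>k. k \<ge> N1 \<Longrightarrow> \<forall>i. g (xs (r k)) y0 $ i < 0"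
    unfolding eventually_sequentially by auto
  define D where "D = 2 * R0"
  define d where "d = (\<lambda>k. norm (ys (r k) - y0))"
  define t where "t = (\<lambda>k. D / d k)"
  define w where "w = (\<lambda>k. (1 - t k) *\<^sub>R y0 + t k *\<^sub>R ys (r k))"
  have dlow: "d k \<ge> real k - norm y0" for k
  proof -
    have "real k \<le> real (r k)" using seq_suble[OF r] by simp
    also have "\<dots> < norm (ys (r k))" by (rule xy(3))
    also have "\<dots> \<le> d k + norm y0" unfolding d_def using norm_triangle_ineq2[of "ys (r k)" y0] by simp
    finally show ?thesis by simp
  qed
  have dtop: "filterlim d at_top sequentially"
    unfolding filterlim_at_top
  proof
    fix Z :: real
    obtain n :: nat where "real n \<ge> Z + norm y0" using real_arch_simple by blast
    then have "\<forall>k\<ge>n. Z \<le> d k" using dlow by (smt (verit) of_nat_le_iff)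
    then show "eventually (\<lambda>k. Z \<le> d k) sequentially" unfolding eventually_sequentially by blast
  qed
  have t0: "t \<longlonglongrightarrow> 0"
    unfolding t_def by (rule tendsto_divide_0[OF tendsto_const filterlim_at_top_imp_at_infinity[OF dtop]])
  obtain N2 where N2: "\<And>k. k \<ge> N2 \<Longrightarrow> d k > D"
    using dtop unfolding filterlim_at_top_dense eventually_sequentially by (meson le_add2 less_add_one order.strict_trans1 filterlim_at_top_dense)
  have wn: "norm (w k - y0) = (if d k = 0 then 0 else D)" for k
  proof -
    have "w k - y0 = t k *\<^sub>R (ys (r k) - y0)" unfolding w_def by (simp add: algebra_simps)
    then have "norm (w k - y0) = \<bar>t k\<bar> * d k" unfolding d_def by simp
    moreover have "d k \<ge> 0" unfolding d_def by simp
    ultimately show ?thesis unfolding t_def D_def using R0 by auto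
  qed
  have "bounded (range w)"
  proof -
    have "range w \<subseteq> cball y0 D" using wn R0 unfolding D_def by (auto simp: dist_norm norm_minus_commute)
    then show ?thesis using bounded_cball bounded_subset by blast
  qed
  then obtain wl s where s: "strict_mono s" and ws: "(w \<circ> s) \<longlonglongrightarrow> wl"
    using bounded_imp_convergent_subsequence by blast
  have Pk: "\<forall>i. g (xs (r k)) (w k) $ i \<le> t k * e" if "k \<ge> max N1 N2" for k
  proof
    fix i
    have dk: "d k > D" using N2 that by auto
    have tk: "0 \<le> t k" "t k \<le> 1" unfolding t_def using dk R0 D_def by auto
    have "g (xs (r k)) (w k) $ i \<le> (1 - t k) * g (xs (r k)) y0 $ i + t k * g (xs (r k)) (ys (r k)) $ i"
      unfolding w_def by (rule convex_onD[OF cvx_g tk]) auto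
    also have "\<dots> \<le> t k * e"
    proof -
      have "(1 - t k) * g (xs (r k)) y0 $ i \<le> 0"
        using N1[of k] that tk by (simp add: mult_nonneg_nonpos less_imp_le)
      moreover have "t k * g (xs (r k)) (ys (r k)) $ i \<le> t k * e"
        using xy(2) tk by (simp add: mult_left_mono)
      ultimately show ?thesis by simp
    qed
    finally show "g (xs (r k)) (w k) $ i \<le> t k * e" .
  qed
  have gw: "g a wl $ i \<le> 0" for i
  proof (rule LIMSEQ_le)
    show "(\<lambda>k. g ((xs \<circ> r \<circ> s) k) ((w \<circ> s) k) $ i) \<longlonglongrightarrow> g a wl $ i"
      by (rule g_seq[OF LIMSEQ_subseq_LIMSEQ[OF xr s] ws])
    show "(\<lambda>k. t (s k) * e) \<longlonglongrightarrow> 0"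
      using tendsto_mult[OF LIMSEQ_subseq_LIMSEQ[OF t0 s] tendsto_const[of e]] by (simp add: o_def)
    show "\<exists>N. \<forall>k\<ge>N. g ((xs \<circ> r \<circ> s) k) ((w \<circ> s) k) $ i \<le> t (s k) * e"
      using Pk seq_suble[OF s] by (metis comp_apply le_trans)
  qed
  have "wl \<in> Y" using inY[OF a] gw by blast
  then have nwl: "norm wl < R0" using R0 by auto
  have ny0: "norm y0 < R0" using y0Y R0 by auto
  have "(\<lambda>k. norm ((w \<circ> s) k - y0)) \<longlonglongrightarrow> norm (wl - y0)"
    by (intro tendsto_intros ws)
  moreover have "(\<lambda>k. norm ((w \<circ> s) k - y0)) \<longlonglongrightarrow> D"
  proof (rule Lim_transform_eventually[OF tendsto_const])
    show "eventually (\<lambda>k. D = norm ((w \<circ> s) k - y0)) sequentially"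
      unfolding eventually_sequentially
    proof (intro exI allI impI)
      fix k assume "k \<ge> N2"
      then have "s k \<ge> N2" using seq_suble[OF s] le_trans by blast
      then have "d (s k) > D" by (rule N2)
      then show "D = norm ((w \<circ> s) k - y0)" using wn[of "s k"] R0 D_def by auto
    qed
  qed
  ultimately have "norm (wl - y0) = D" using LIMSEQ_unique by blast
  moreover have "norm (wl - y0) < D" using nwl ny0 D_def norm_triangle_ineq4[of wl y0] by linarith
  ultimately show False by simp
qed

lemma ybound: "\<exists>R. \<forall>x\<in>Xset G. \<forall>y. (\<forall>i. g x y $ i \<le> e) \<longrightarrow> norm y \<le> R"
proof -
  obtain R where "\<forall>x\<in>Xset G. \<forall>y. (\<forall>i. g x y $ i \<le> max e 0) \<longrightarrow> norm y \<le> R"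
    using ybound0[of "max e 0"] by auto
  then show ?thesis by (meson max.coboundedI1)
qed

lemma seq_ub: "(u::nat \<Rightarrow> real) \<longlonglongrightarrow> l \<Longrightarrow> \<exists>B. \<forall>k. u k \<le> B"
  using convergent_imp_bounded[of u l] unfolding bounded_real by (meson abs_le_D1 rangeI)

lemma bddF: "bdd_below ((\<lambda>(x, y, lam). F x y) ` Cset G f g Y e \<mu>)"
proof -
  obtain R where R: "\<forall>x\<in>Xset G. \<forall>y. (\<forall>i. g x y $ i \<le> e) \<longrightarrow> norm y \<le> R"
    using ybound by blast
  have "compact ((\<lambda>(x, y). F x y) ` (Xset G \<times> cball 0 R))"
    by (intro compact_continuous_image continuous_on_subset[OF C2_cont[OF C2F]] compact_Times cX compact_cball) auto
  then have b: "bdd_below ((\<lambda>(x, y). F x y) ` (Xset G \<times> cball 0 R))"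
    by (intro bounded_imp_bdd_below compact_imp_bounded)
  have "(\<lambda>(x, y, lam). F x y) ` Cset G f g Y e \<mu> \<subseteq> (\<lambda>(x, y). F x y) ` (Xset G \<times> cball 0 R)"
  proof
    fix v assume "v \<in> (\<lambda>(x, y, lam). F x y) ` Cset G f g Y e \<mu>"
    then obtain x y lam where v: "v = F x y" and c: "(x, y, lam) \<in> Cset G f g Y e \<mu>" by auto
    have "x \<in> Xset G" "\<forall>i. g x y $ i \<le> e" using c unfolding Cset_def Xset_def by auto
    then have "(x, y) \<in> Xset G \<times> cball 0 R" using R by auto
    then show "v \<in> (\<lambda>(x, y). F x y) ` (Xset G \<times> cball 0 R)" using v by force
  qed
  then show ?thesis by (rule bdd_below_mono[OF b])
qed

lemma key:
  assumes es: "es \<longlonglongrightarrow> e0" and ms: "ms \<longlonglongrightarrow> 0" and mpos: "\<And>k. ms k \<ge> 0"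
    and qs: "\<And>k. qs k \<in> Cset G f g Y (es k) (ms k)"
  shows "\<exists>r p. strict_mono r \<and> (qs \<circ> r) \<longlonglongrightarrow> p"
proof -
  define xs where "xs = (\<lambda>k. fst (qs k))"
  define ys where "ys = (\<lambda>k. fst (snd (qs k)))"
  define ls where "ls = (\<lambda>k. snd (snd (qs k)))"
  have qe: "qs k = (xs k, ys k, ls k)" for k by (simp add: xs_def ys_def ls_def)
  have C: "(\<forall>i. G (xs k) $ i \<le> 0) \<and> (\<forall>i. g (xs k) (ys k) $ i \<le> es k) \<and>
      (\<forall>i. 0 \<le> ls k $ i) \<and> f (xs k) (ys k) - hmu Y f g (ms k) (ls k) (xs k) \<le> es k" for k
    using qs[of k] unfolding qe Cset_def by auto
  have xX: "xs k \<in> Xset G" for k using C unfolding Xset_def by auto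
  obtain E where E: "\<And>k. es k \<le> E" using seq_ub[OF es] by blast
  obtain R where R: "\<forall>x\<in>Xset G. \<forall>y. (\<forall>i. g x y $ i \<le> E) \<longrightarrow> norm y \<le> R"
    using ybound by blast
  have yR: "ys k \<in> cball 0 R" for k
  proof -
    have "\<forall>i. g (xs k) (ys k) $ i \<le> E" using C[of k] E[of k] by (auto intro: order_trans)
    then show ?thesis using R xX[of k] by auto
  qed
  have "bounded (range (\<lambda>k. (xs k, ys k)))"
    by (rule bounded_subset[OF bounded_Times[OF compact_imp_bounded[OF cX] bounded_cball[of 0 R]]])
      (use xX yR in auto)
  then obtain ab r1 where r1: "strict_mono r1" and lab: "((\<lambda>k. (xs k, ys k)) \<circ> r1) \<longlonglongrightarrow> ab"
    using bounded_imp_convergent_subsequence by blast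
  obtain a b where abe: "ab = (a, b)" by (cases ab)
  have xa: "(xs \<circ> r1) \<longlonglongrightarrow> a" using tendsto_fst[OF lab] abe by (simp add: o_def)
  have yb: "(ys \<circ> r1) \<longlonglongrightarrow> b" using tendsto_snd[OF lab] abe by (simp add: o_def)
  have a: "a \<in> Xset G"
    by (rule closed_sequentially[OF compact_imp_closed[OF cX] _ xa]) (simp add: xX)
  obtain y0 where y0: "\<forall>i. g a y0 $ i < 0" using R1[OF a] by blast
  have y0Y: "y0 \<in> Y" using inY[OF a] y0 by (auto intro: less_imp_le)
  define c where "c = Max (range (\<lambda>i. g a y0 $ i))"
  have c: "c < 0" unfolding c_def using y0 by (subst Max_less_iff) auto
  have cge: "g a y0 $ i \<le> c" for i unfolding c_def by (rule Max_ge) auto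
  have "eventually (\<lambda>k. \<forall>i. g ((xs \<circ> r1) k) y0 $ i < c / 2) sequentially"
  proof (rule eventually_all_finite)
    fix i
    have "(\<lambda>k. g ((xs \<circ> r1) k) ((\<lambda>_. y0) k) $ i) \<longlonglongrightarrow> g a y0 $ i"
      by (rule g_seq[OF xa tendsto_const])
    moreover have "g a y0 $ i < c / 2" using cge[of i] c by linarith
    ultimately show "eventually (\<lambda>k. g ((xs \<circ> r1) k) y0 $ i < c / 2) sequentially"
      using order_tendstoD(2) by fastforce
  qed
  then obtain N where N: "\<And>k. k \<ge> N \<Longrightarrow> \<forall>i. g (xs (r1 k)) y0 $ i < c / 2"
    unfolding eventually_sequentially by auto
  define h where "h = (\<lambda>k. ms (r1 k) * (norm y0)\<^sup>2 + f (xs (r1 k)) y0 - f (xs (r1 k)) (ys (r1 k)) + es (r1 k))"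
  have "h \<longlonglongrightarrow> 0 * (norm y0)\<^sup>2 + f a y0 - f a b + e0"
    unfolding h_def
    by (intro tendsto_intros f_seq[OF xa[unfolded o_def] tendsto_const] f_seq[OF xa[unfolded o_def] yb[unfolded o_def]]
        LIMSEQ_subseq_LIMSEQ[OF ms r1, unfolded o_def] LIMSEQ_subseq_LIMSEQ[OF es r1, unfolded o_def])
  then obtain Hb where Hb: "\<And>k. h k \<le> Hb" using seq_ub by blast
  define L where "L = 2 * Hb / (- c)"
  have lsum: "(\<Sum>i\<in>UNIV. ls (r1 k) $ i) \<le> L" if "k \<ge> N" for k
  proof -
    let ?k = "r1 k"
    have "f (xs ?k) (ys ?k) - es ?k \<le> hmu Y f g (ms ?k) (ls ?k) (xs ?k)" using C[of ?k] by simp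
    also have "\<dots> \<le> ms ?k * (norm y0)\<^sup>2 + f (xs ?k) y0 + ls ?k \<bullet> g (xs ?k) y0" by (rule hmu_le[OF y0Y])
    also have "ls ?k \<bullet> g (xs ?k) y0 = (\<Sum>i\<in>UNIV. ls ?k $ i * g (xs ?k) y0 $ i)"
      by (simp add: inner_vec_def)
    also have "\<dots> \<le> (\<Sum>i\<in>UNIV. ls ?k $ i * (c / 2))"
      by (intro sum_mono mult_left_mono) (use N[OF that] C in \<open>auto intro: less_imp_le\<close>)
    also have "\<dots> = (c / 2) * (\<Sum>i\<in>UNIV. ls ?k $ i)" by (simp add: sum_distrib_left mult.commute)
    finally have "(- c / 2) * (\<Sum>i\<in>UNIV. ls ?k $ i) \<le> h k" unfolding h_def by simp
    with Hb[of k] have "(- c / 2) * (\<Sum>i\<in>UNIV. ls ?k $ i) \<le> Hb" by linarith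
    then show ?thesis unfolding L_def using c by (simp add: field_simps)
  qed
  have lL: "ls (r1 k) \<in> cball 0 L" if "k \<ge> N" for k
  proof -
    have "norm (ls (r1 k)) \<le> (\<Sum>i\<in>UNIV. \<bar>ls (r1 k) $ i\<bar>)" by (rule norm_le_l1_cart)
    also have "\<dots> = (\<Sum>i\<in>UNIV. ls (r1 k) $ i)" using C by simp
    also have "\<dots> \<le> L" using lsum[OF that] .
    finally show ?thesis by simp
  qed
  define u where "u = (\<lambda>k. qs (r1 (k + N)))"
  have "bounded (range u)"
    by (rule bounded_subset[OF bounded_Times[OF compact_imp_bounded[OF cX] bounded_Times[OF bounded_cball[of 0 R] bounded_cball[of 0 L]]]])
      (use xX yR lL in \<open>auto simp: u_def qe\<close>)
  then obtain p r2 where r2: "strict_mono r2" and up: "(u \<circ> r2) \<longlonglongrightarrow> p"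
    using bounded_imp_convergent_subsequence by blast
  have "strict_mono (r1 \<circ> (\<lambda>k. r2 k + N))"
    using r1 r2 unfolding strict_mono_def by auto
  moreover have "(qs \<circ> (r1 \<circ> (\<lambda>k. r2 k + N))) = u \<circ> r2" by (auto simp: u_def)
  ultimately show ?thesis using up by metis
qed

lemma Fq_seq:
  assumes "qs \<longlonglongrightarrow> (x, y, lam)"
  shows "(\<lambda>k. case qs k of (x, y, lam) \<Rightarrow> F x y) \<longlonglongrightarrow> F x y"
proof -
  have e: "(\<lambda>k. case qs k of (x, y, lam) \<Rightarrow> F x y) = (\<lambda>k. F (fst (qs k)) (fst (snd (qs k))))"
    by (auto split: prod.splits)
  show ?thesis unfolding e
    using F_seq[OF tendsto_fst[OF assms] tendsto_fst[OF tendsto_snd[OF assms]]] by simp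
qed

lemma zarg_le:
  assumes "q \<in> DBP_zargmin F G f g Y e \<mu> z" "q' \<in> Cset G f g Y e \<mu>"
  shows "(case q of (x, y, lam) \<Rightarrow> F x y) \<le> (case q' of (x, y, lam) \<Rightarrow> F x y) + z"
proof -
  have "(case q of (x, y, lam) \<Rightarrow> F x y) \<le> DBP_inf F G f g Y e \<mu> + z"
    using assms(1) unfolding DBP_zargmin_def by (auto split: prod.splits)
  moreover have "DBP_inf F G f g Y e \<mu> \<le> (case q' of (x, y, lam) \<Rightarrow> F x y)"
    unfolding DBP_inf_def by (rule cInf_lower[OF _ bddF]) (use assms(2) in force)
  ultimately show ?thesis by simp
qed

lemma zarg_C: "q \<in> DBP_zargmin F G f g Y e \<mu> z \<Longrightarrow> q \<in> Cset G f g Y e \<mu>"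
  unfolding DBP_zargmin_def by auto

lemma zarg_le_inf:
  assumes "q \<in> DBP_zargmin F G f g Y e \<mu> z" "Cset G f g Y e0 0 \<noteq> {}" "e0 \<le> e" "0 \<le> \<mu>"
  shows "(case q of (x, y, lam) \<Rightarrow> F x y) \<le> DBP_inf F G f g Y e0 0 + z"
proof -
  have "(case q of (x, y, lam) \<Rightarrow> F x y) \<le> DBP_inf F G f g Y e \<mu> + z"
    using assms(1) unfolding DBP_zargmin_def by (auto split: prod.splits)
  moreover have "DBP_inf F G f g Y e \<mu> \<le> DBP_inf F G f g Y e0 0"
    unfolding DBP_inf_def
    by (rule cInf_superset_mono[OF _ bddF image_mono[OF Csub[OF assms(3,4)]]]) (use assms(2) in auto)
  ultimately show ?thesis by simp
qed

end

theorem corollary4: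
  fixes F f :: "real^'n \<Rightarrow> real^'m \<Rightarrow> real"
    and g :: "real^'n \<Rightarrow> real^'m \<Rightarrow> real^'p"
    and G :: "real^'n \<Rightarrow> real^'q"
    and Y :: "(real^'m) set"
    and \<epsilon>bar :: real
  assumes A1_convex_f: "\<And>x. convex_on UNIV (\<lambda>y. f x y)"
    and A1_convex_g: "\<And>x i. convex_on UNIV (\<lambda>y. g x y $ i)"
    and A1_C2_f: "C2 (\<lambda>(x, y). f x y)"
    and A1_C2_g: "C2 (\<lambda>(x, y). g x y)"
    and A2_Y: "compact Y" "convex Y"
    and A2_int: "{y. \<exists>x \<in> Xset G. \<forall>i. g x y $ i \<le> 0} \<subseteq> interior Y"
    and A3_F: "C2 (\<lambda>(x, y). F x y)"
    and A3_G: "C2 G"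
    and R1: "\<And>x. x \<in> Xset G \<Longrightarrow> \<exists>y. \<forall>i. g x y $ i < 0"
    and R2_X: "compact (Xset G)" "Xset G \<noteq> {}"
    and R2_MFCQ: "\<And>x. x \<in> Xset G \<Longrightarrow> MFCQ G x"
    and eps: "\<epsilon>bar \<ge> 0"
  shows
    "(\<forall>(\<epsilon>s::nat \<Rightarrow> real) (\<mu>s::nat \<Rightarrow> real) (zs::nat \<Rightarrow> real) ps r p.
        (\<forall>k. \<epsilon>s k > \<epsilon>bar \<and> \<mu>s k > 0 \<and> zs k > 0) \<and>
        \<epsilon>s \<longlonglongrightarrow> \<epsilon>bar \<and> \<mu>s \<longlonglongrightarrow> 0 \<and> zs \<longlonglongrightarrow> 0 \<and>
        (\<forall>k. ps k \<in> DBP_zargmin F G f g Y (\<epsilon>s k) (\<mu>s k) (zs k)) \<and>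
        strict_mono r \<and> (ps \<circ> r) \<longlonglongrightarrow> p
        \<longrightarrow> p \<in> DBP_argmin F G f g Y \<epsilon>bar 0)
   \<and> (\<forall>(\<epsilon>s::nat \<Rightarrow> real) (\<mu>s::nat \<Rightarrow> real) (zs::nat \<Rightarrow> real) ps.
        (\<forall>k. \<epsilon>s k > \<epsilon>bar \<and> \<mu>s k > 0 \<and> zs k > 0) \<and>
        \<epsilon>s \<longlonglongrightarrow> \<epsilon>bar \<and> \<mu>s \<longlonglongrightarrow> 0 \<and> zs \<longlonglongrightarrow> 0 \<and>
        (\<forall>k. ps k \<in> DBP_zargmin F G f g Y (\<epsilon>s k) (\<mu>s k) (zs k))
        \<longrightarrow> ((\<lambda>k. case ps k of (x, y, lam) \<Rightarrow> F x y) \<longlonglongrightarrow> DBP_inf F G f g Y \<epsilon>bar 0))"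
proof -
  interpret dbp F f g G Y
    by unfold_locales (use A1_convex_g A1_C2_f A1_C2_g A2_Y A2_int A3_F A3_G R1 R2_X in auto)
  let ?F = "\<lambda>q. case q of (x, y, lam) \<Rightarrow> F x y"
  have P1: "p \<in> DBP_argmin F G f g Y \<epsilon>bar 0"
    if h: "\<forall>k. es k > \<epsilon>bar \<and> ms k > 0 \<and> zs k > 0" "es \<longlonglongrightarrow> \<epsilon>bar" "ms \<longlonglongrightarrow> 0" "zs \<longlonglongrightarrow> 0"
      "\<forall>k. ps k \<in> DBP_zargmin F G f g Y (es k) (ms k) (zs k)" "strict_mono r" "(ps \<circ> r) \<longlonglongrightarrow> p"
    for es ms zs ps r p
  proof -
    have psC: "\<And>k. ps k \<in> Cset G f g Y (es k) (ms k)" using zarg_C h(5) by blast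
    obtain x y lam where pe: "p = (x, y, lam)" by (cases p) auto
    have pC: "p \<in> Cset G f g Y \<epsilon>bar 0" unfolding pe
      by (rule Cclosed[of "es \<circ> r" \<epsilon>bar "ms \<circ> r" "ps \<circ> r"])
        (use LIMSEQ_subseq_LIMSEQ[OF h(2) h(6)] LIMSEQ_subseq_LIMSEQ[OF h(3) h(6)] psC h(1) h(7)[unfolded pe] in \<open>auto intro: less_imp_le\<close>)
    have "F x y \<le> ?F q" if q: "q \<in> Cset G f g Y \<epsilon>bar 0" for q
    proof (rule LIMSEQ_le)
      show "(\<lambda>k. ?F ((ps \<circ> r) k)) \<longlonglongrightarrow> F x y" using Fq_seq[OF h(7)[unfolded pe]] by (simp add: o_def)
      show "(\<lambda>k. ?F q + zs (r k)) \<longlonglongrightarrow> ?F q"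
        using tendsto_add[OF tendsto_const LIMSEQ_subseq_LIMSEQ[OF h(4) h(6)]] by (simp add: o_def)
      have "?F ((ps \<circ> r) k) \<le> ?F q + zs (r k)" for k
      proof -
        have "\<epsilon>bar \<le> es (r k)" "0 \<le> ms (r k)" using h(1) by (auto intro: less_imp_le)
        then have "q \<in> Cset G f g Y (es (r k)) (ms (r k))" using Csub q by blast
        from zarg_le[OF h(5)[rule_format] this] show ?thesis by simp
      qed
      then show "\<exists>N. \<forall>k\<ge>N. ?F ((ps \<circ> r) k) \<le> ?F q + zs (r k)" by blast
    qed
    then show ?thesis using pC unfolding pe DBP_argmin_def by auto
  qed
  have P2: "(\<lambda>k. ?F (ps k)) \<longlonglongrightarrow> DBP_inf F G f g Y \<epsilon>bar 0"
    if h: "\<forall>k. es k > \<epsilon>bar \<and> ms k > 0 \<and> zs k > 0" "es \<longlonglongrightarrow> \<epsilon>bar" "ms \<longlonglongrightarrow> 0" "zs \<longlonglongrightarrow> 0"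
      "\<forall>k. ps k \<in> DBP_zargmin F G f g Y (es k) (ms k) (zs k)"
    for es ms zs ps
  proof -
    have psC: "\<And>k. ps k \<in> Cset G f g Y (es k) (ms k)" using zarg_C h(5) by blast
    let ?L = "DBP_inf F G f g Y \<epsilon>bar 0"
    have sub: "\<exists>r p. strict_mono r \<and> p \<in> Cset G f g Y \<epsilon>bar 0 \<and> (\<lambda>k. ?F (ps (s (r k)))) \<longlonglongrightarrow> ?F p"
      if s: "strict_mono s" for s :: "nat \<Rightarrow> nat"
    proof -
      have "\<exists>r p. strict_mono r \<and> ((ps \<circ> s) \<circ> r) \<longlonglongrightarrow> p"
      proof (rule key[of "es \<circ> s" \<epsilon>bar "ms \<circ> s" "ps \<circ> s"])
        show "(es \<circ> s) \<longlonglongrightarrow> \<epsilon>bar" by (rule LIMSEQ_subseq_LIMSEQ[OF h(2) s])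
        show "(ms \<circ> s) \<longlonglongrightarrow> 0" by (rule LIMSEQ_subseq_LIMSEQ[OF h(3) s])
        show "0 \<le> (ms \<circ> s) k" for k using h(1) by (simp add: less_imp_le)
        show "(ps \<circ> s) k \<in> Cset G f g Y ((es \<circ> s) k) ((ms \<circ> s) k)" for k using psC by simp
      qed
      then obtain r p where r: "strict_mono r" and lp: "((ps \<circ> s) \<circ> r) \<longlonglongrightarrow> p" by blast
      obtain x y lam where pe: "p = (x, y, lam)" by (cases p) auto
      have "p \<in> Cset G f g Y \<epsilon>bar 0" unfolding pe
        by (rule Cclosed[of "es \<circ> s \<circ> r" \<epsilon>bar "ms \<circ> s \<circ> r" "ps \<circ> s \<circ> r"])
          (use LIMSEQ_subseq_LIMSEQ[OF h(2) strict_mono_o[OF s r]] LIMSEQ_subseq_LIMSEQ[OF h(3) strict_mono_o[OF s r]] psC h(1) lp[unfolded pe] in \<open>auto intro: less_imp_le simp: o_assoc\<close>)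
      moreover have "(\<lambda>k. ?F (ps (s (r k)))) \<longlonglongrightarrow> ?F p" using Fq_seq[of "ps \<circ> s \<circ> r"] lp pe by simp
      ultimately show ?thesis using r by blast
    qed
    obtain r0 p0 where "p0 \<in> Cset G f g Y \<epsilon>bar 0" using sub[of id] by (auto simp: strict_mono_def)
    then have Cne: "Cset G f g Y \<epsilon>bar 0 \<noteq> {}" by blast
    have upper: "?F (ps k) \<le> ?L + zs k" for k
      by (rule zarg_le_inf[OF h(5)[rule_format] Cne]) (use h(1) in \<open>auto intro: less_imp_le\<close>)
    show ?thesis
    proof (rule order_tendstoI)
      fix b assume b: "b < ?L"
      show "eventually (\<lambda>k. b < ?F (ps k)) sequentially"
      proof (rule ccontr)
        assume "\<not> eventually (\<lambda>k. b < ?F (ps k)) sequentially"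
        then have "frequently (\<lambda>k. \<not> b < ?F (ps k)) cofinite"
          by (simp add: not_eventually cofinite_eq_sequentially)
        then have "infinite {k. \<not> b < ?F (ps k)}" by (simp add: frequently_cofinite)
        then obtain s :: "nat \<Rightarrow> nat" where s: "strict_mono s" "\<And>n. s n \<in> {k. \<not> b < ?F (ps k)}"
          using infinite_enumerate by blast
        obtain r p where r: "strict_mono r" and pC: "p \<in> Cset G f g Y \<epsilon>bar 0"
          and lim: "(\<lambda>k. ?F (ps (s (r k)))) \<longlonglongrightarrow> ?F p"
          using sub[OF s(1)] by blast
        have "?F p \<le> b"
          by (rule LIMSEQ_le_const2[OF lim]) (use s(2) in \<open>auto simp: not_less\<close>)
        moreover have "?L \<le> ?F p"
          unfolding DBP_inf_def by (rule cInf_lower[OF imageI[OF pC] bddF])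
        ultimately show False using b by simp
      qed
    next
      fix b assume b: "?L < b"
      have "eventually (\<lambda>k. zs k < b - ?L) sequentially"
        using order_tendstoD(2)[OF h(4)] b by simp
      then show "eventually (\<lambda>k. ?F (ps k) < b) sequentially"
        by eventually_elim (use upper in \<open>smt (verit)\<close>)
    qed
  qed
  show ?thesis using P1 P2 by blast
qed

end
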